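(* Consider the half-duplex (HD) two-stage relay selection (TRS) scheme described in the context with $K\ge1$ relays, with $\varpi=0$, thresholds $\gamma_{th_j}=2^{2R_{D_j}}-1$ for $j=1,2$, and power coefficients satisfying $0<a_1<a_2$, $a_1+a_2=1$, $a_2>a_1\gamma_{th_2}$. Then its diversity order equals the number of relays: $$-\lim_{\rho\to\infty}\frac{\log P_{TRS}^{HD}(\rho)}{\log\rho}=K .$$
   Context: Network model. A base station (BS) is at the origin of the plane. There are $K\ge 1$ relays $R_1,\dots,R_K$ whose positions are i.i.d. uniformly distributed in the disc of radius $R_{\mathcal D}>0$ centred at the origin; $d_{SR_i}$ is the distance from the BS to $R_i$. Two users $D_1,D_2$ are at fixed points of the plane at distances $d_1,d_2>0$ from the BS, and $d_{R_iD_j}$ is the Euclidean distance between $R_i$ and $D_j$. Let $\alpha>0$ be the path loss exponent. The random variables $g_{SR_i}$, $g_{R_iD_1}$, $g_{R_iD_2}$ ($i=1,\dots,K$) are exponentially distributed with mean $1$ (squared magnitudes of $\mathcal{CN}(0,1)$ Rayleigh coefficients), $Z_i$ is exponentially distributed with mean $\Omega_{LI}>0$, and all of these are mutually independent and independent of the relay positions. Put $X_i=g_{SR_i}/(1+d_{SR_i}^\alpha)$ and $Y_{ji}=g_{R_iD_j}/(1+d_{R_iD_j}^\alpha)$. Let $\rho>0$ be the transmit SNR, $a_1,a_2$ power allocation coefficients, and $\varpi\in\{0,1\}$ the duplex factor. Define $\gamma_{D_2\to R_i}=\frac{\rho X_i a_2}{\rho X_i a_1+\rho\varpi Z_i+1}$,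 $\gamma_{D_1\to R_i}=\frac{\rho X_i a_1}{\rho\varpi Z_i+1}$, $\gamma^{(i)}_{D_2\to D_1}=\frac{\rho Y_{1i}a_2}{\rho Y_{1i}a_1+1}$, $\gamma^{(i)}_{D_1}=\rho Y_{1i}a_1$, $\gamma^{(i)}_{D_2}=\frac{\rho Y_{2i}a_2}{\rho Y_{2i}a_1+1}$. Target rates $R_{D_1},R_{D_2}>0$ are given; in HD mode $\varpi=0$ and $\gamma_{th_j}=2^{2R_{D_j}}-1$. TRS scheme: let $S=\{i: \gamma_{D_2\to R_i}\ge\gamma_{th_2},\ \gamma^{(i)}_{D_2\to D_1}\ge\gamma_{th_2},\ \gamma^{(i)}_{D_2}\ge\gamma_{th_2}\}$. The outage event is that either $S=\emptyset$, or $S\neq\emptyset$ and $\max_{i\in S}\min\{\gamma_{D_1\to R_i},\gamma^{(i)}_{D_1}\}<\gamma_{th_1}$; $P_{TRS}(\rho)$ is its probability, and $P_{TRS}^{HD}$ denotes it in HD mode. *)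

theory Defs
  imports "HOL-Probability.Probability"
begin

text \<open>Randomness attached to one relay R_i:
  (position in the plane (as a complex number), g_SR, g_RD1, g_RD2, Z_LI).\<close>
type_synonym relay_sample = "complex \<times> real \<times> real \<times> real \<times> real"

definition exp_mean :: "real \<Rightarrow> real measure" where
  "exp_mean m = density lborel (exponential_density (1 / m))"

text \<open>Joint law of the randomness of one relay: uniform position in the disc of
  radius RD centred at the BS (origin), independent of the fading gains and Z.\<close>
definition relay_measure :: "real \<Rightarrow> real \<Rightarrow> relay_sample measure" where
  "relay_measure RD Omega =
     uniform_measure lborel (cball 0 RD) \<Otimes>\<^sub>M
     (exp_mean 1 \<Otimes>\<^sub>M (exp_mean 1 \<Otimes>\<^sub>M (exp_mean 1 \<Otimes>\<^sub>M exp_mean Omega)))"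

definition network_space :: "real \<Rightarrow> real \<Rightarrow> nat \<Rightarrow> (nat \<Rightarrow> relay_sample) measure" where
  "network_space RD Omega K = PiM {..<K} (\<lambda>_. relay_measure RD Omega)"

definition X_gain :: "real \<Rightarrow> relay_sample \<Rightarrow> real" where
  "X_gain alpha = (\<lambda>(p, gSR, g1, g2, z). gSR / (1 + cmod p powr alpha))"

definition Y1_gain :: "real \<Rightarrow> complex \<Rightarrow> relay_sample \<Rightarrow> real" where
  "Y1_gain alpha u1 = (\<lambda>(p, gSR, g1, g2, z). g1 / (1 + cmod (p - u1) powr alpha))"

definition Y2_gain :: "real \<Rightarrow> complex \<Rightarrow> relay_sample \<Rightarrow> real" where
  "Y2_gain alpha u2 = (\<lambda>(p, gSR, g1, g2, z). g2 / (1 + cmod (p - u2) powr alpha))"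

definition Z_li :: "relay_sample \<Rightarrow> real" where
  "Z_li = (\<lambda>(p, gSR, g1, g2, z). z)"

text \<open>SINRs; w is the duplex factor, rho the transmit SNR.\<close>
definition gamma_D2_R :: "real \<Rightarrow> real \<Rightarrow> real \<Rightarrow> real \<Rightarrow> real \<Rightarrow> relay_sample \<Rightarrow> real" where
  "gamma_D2_R alpha a1 a2 w rho s =
     rho * X_gain alpha s * a2 / (rho * X_gain alpha s * a1 + rho * w * Z_li s + 1)"

definition gamma_D1_R :: "real \<Rightarrow> real \<Rightarrow> real \<Rightarrow> real \<Rightarrow> relay_sample \<Rightarrow> real" where
  "gamma_D1_R alpha a1 w rho s = rho * X_gain alpha s * a1 / (rho * w * Z_li s + 1)"

definition gamma_D2_D1 :: "real \<Rightarrow> complex \<Rightarrow> real \<Rightarrow> real \<Rightarrow> real \<Rightarrow> relay_sample \<Rightarrow> real" where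
  "gamma_D2_D1 alpha u1 a1 a2 rho s =
     rho * Y1_gain alpha u1 s * a2 / (rho * Y1_gain alpha u1 s * a1 + 1)"

definition gamma_D1 :: "real \<Rightarrow> complex \<Rightarrow> real \<Rightarrow> real \<Rightarrow> relay_sample \<Rightarrow> real" where
  "gamma_D1 alpha u1 a1 rho s = rho * Y1_gain alpha u1 s * a1"

definition gamma_D2 :: "real \<Rightarrow> complex \<Rightarrow> real \<Rightarrow> real \<Rightarrow> real \<Rightarrow> relay_sample \<Rightarrow> real" where
  "gamma_D2 alpha u2 a1 a2 rho s =
     rho * Y2_gain alpha u2 s * a2 / (rho * Y2_gain alpha u2 s * a1 + 1)"

definition TRS_S :: "real \<Rightarrow> complex \<Rightarrow> complex \<Rightarrow> real \<Rightarrow> real \<Rightarrow> real \<Rightarrow> real \<Rightarrow> real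
    \<Rightarrow> nat \<Rightarrow> (nat \<Rightarrow> relay_sample) \<Rightarrow> nat set" where
  "TRS_S alpha u1 u2 a1 a2 w g2 rho K om =
     {i. i < K \<and> gamma_D2_R alpha a1 a2 w rho (om i) \<ge> g2
          \<and> gamma_D2_D1 alpha u1 a1 a2 rho (om i) \<ge> g2
          \<and> gamma_D2 alpha u2 a1 a2 rho (om i) \<ge> g2}"

definition TRS_outage :: "real \<Rightarrow> complex \<Rightarrow> complex \<Rightarrow> real \<Rightarrow> real \<Rightarrow> real \<Rightarrow> real \<Rightarrow> real \<Rightarrow> real
    \<Rightarrow> nat \<Rightarrow> (nat \<Rightarrow> relay_sample) \<Rightarrow> bool" where
  "TRS_outage alpha u1 u2 a1 a2 w g1 g2 rho K om =
     (let S = TRS_S alpha u1 u2 a1 a2 w g2 rho K om in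
      S = {} \<or> (S \<noteq> {} \<and>
        Max ((\<lambda>i. min (gamma_D1_R alpha a1 w rho (om i)) (gamma_D1 alpha u1 a1 rho (om i))) ` S) < g1))"

definition P_TRS :: "real \<Rightarrow> complex \<Rightarrow> complex \<Rightarrow> real \<Rightarrow> real \<Rightarrow> nat \<Rightarrow> real \<Rightarrow> real \<Rightarrow> real
    \<Rightarrow> real \<Rightarrow> real \<Rightarrow> real \<Rightarrow> real" where
  "P_TRS alpha u1 u2 RD Omega K a1 a2 w g1 g2 rho =
     measure (network_space RD Omega K)
       {om \<in> space (network_space RD Omega K). TRS_outage alpha u1 u2 a1 a2 w g1 g2 rho K om}"

definition gamma_th_HD :: "real \<Rightarrow> real" where
  "gamma_th_HD R = 2 powr (2 * R) - 1"

definition P_TRS_HD :: "real \<Rightarrow> complex \<Rightarrow> complex \<Rightarrow> real \<Rightarrow> real \<Rightarrow> nat \<Rightarrow> real \<Rightarrow> real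
    \<Rightarrow> real \<Rightarrow> real \<Rightarrow> real \<Rightarrow> real" where
  "P_TRS_HD alpha u1 u2 RD Omega K a1 a2 R1 R2 rho =
     P_TRS alpha u1 u2 RD Omega K a1 a2 0 (gamma_th_HD R1) (gamma_th_HD R2) rho"

end

theory Submission
  imports Defs
begin

lemma prob_exp_mean: "m > 0 \<Longrightarrow> prob_space (exp_mean m)"
  unfolding exp_mean_def by (rule prob_space_exponential_density) simp

lemma prob_unif:
  assumes "RD > 0" shows "prob_space (uniform_measure lborel (cball (0::complex) RD))"
proof (rule prob_space_uniform_measure)
  have "emeasure lborel (cball (0::complex) RD) = ennreal (measure lborel (cball (0::complex) RD))"
    using emeasure_lborel_cball_finite[of "0::complex" RD] by (intro emeasure_eq_ennreal_measure) auto
  moreover have "measure lborel (cball (0::complex) RD) > 0" using content_cball_pos assms by blast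
  ultimately show "emeasure lborel (cball (0::complex) RD) \<noteq> 0" "emeasure lborel (cball (0::complex) RD) \<noteq> \<infinity>"
    by auto
qed

lemma prob_relay: "RD > 0 \<Longrightarrow> Omega > 0 \<Longrightarrow> prob_space (relay_measure RD Omega)"
  unfolding relay_measure_def
  by (intro prob_space_pair prob_unif prob_exp_mean) auto

lemma prob_net: "RD > 0 \<Longrightarrow> Omega > 0 \<Longrightarrow> prob_space (network_space RD Omega K)"
  unfolding network_space_def by (intro prob_space_PiM prob_relay)

lemma space_relay: "space (relay_measure RD Omega) = UNIV"
  unfolding relay_measure_def exp_mean_def by (simp add: space_pair_measure)

lemma sets_relay: "sets (relay_measure RD Omega) = sets (borel \<Otimes>\<^sub>M (borel \<Otimes>\<^sub>M (borel \<Otimes>\<^sub>M (borel \<Otimes>\<^sub>M borel))))"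
  unfolding relay_measure_def exp_mean_def
  by (intro sets_pair_measure_cong) auto

lemma X_eq: "X_gain alpha = (\<lambda>s. fst (snd s) / (1 + cmod (fst s) powr alpha))"
  by (auto simp: X_gain_def split: prod.split)
lemma Y1_eq: "Y1_gain alpha u = (\<lambda>s. fst (snd (snd s)) / (1 + cmod (fst s - u) powr alpha))"
  by (auto simp: Y1_gain_def split: prod.split)
lemma Y2_eq: "Y2_gain alpha u = (\<lambda>s. fst (snd (snd (snd s))) / (1 + cmod (fst s - u) powr alpha))"
  by (auto simp: Y2_gain_def split: prod.split)
lemma Z_eq: "Z_li = (\<lambda>s. snd (snd (snd (snd s))))"
  by (auto simp: Z_li_def split: prod.split)

lemma relay_meas: "f \<in> borel_measurable (borel \<Otimes>\<^sub>M (borel \<Otimes>\<^sub>M (borel \<Otimes>\<^sub>M (borel \<Otimes>\<^sub>M borel)))) \<Longrightarrow> f \<in> borel_measurable (relay_measure RD Omega)"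
  using measurable_cong_sets[OF sets_relay refl] by blast

lemma X_meas[measurable]: "X_gain alpha \<in> borel_measurable (borel \<Otimes>\<^sub>M (borel \<Otimes>\<^sub>M (borel \<Otimes>\<^sub>M (borel \<Otimes>\<^sub>M borel))))"
  unfolding X_eq by measurable

lemma Y1_meas[measurable]: "Y1_gain alpha u \<in> borel_measurable (borel \<Otimes>\<^sub>M (borel \<Otimes>\<^sub>M (borel \<Otimes>\<^sub>M (borel \<Otimes>\<^sub>M borel))))"
  unfolding Y1_eq by measurable
lemma Y2_meas[measurable]: "Y2_gain alpha u \<in> borel_measurable (borel \<Otimes>\<^sub>M (borel \<Otimes>\<^sub>M (borel \<Otimes>\<^sub>M (borel \<Otimes>\<^sub>M borel))))"
  unfolding Y2_eq by measurable
lemma Z_meas[measurable]: "Z_li \<in> borel_measurable (borel \<Otimes>\<^sub>M (borel \<Otimes>\<^sub>M (borel \<Otimes>\<^sub>M (borel \<Otimes>\<^sub>M borel))))"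
  unfolding Z_eq by measurable
lemma g1_meas[measurable]: "gamma_D2_R alpha a1 a2 w rho \<in> borel_measurable (borel \<Otimes>\<^sub>M (borel \<Otimes>\<^sub>M (borel \<Otimes>\<^sub>M (borel \<Otimes>\<^sub>M borel))))"
  unfolding gamma_D2_R_def by measurable
lemma g2_meas[measurable]: "gamma_D2_D1 alpha u1 a1 a2 rho \<in> borel_measurable (borel \<Otimes>\<^sub>M (borel \<Otimes>\<^sub>M (borel \<Otimes>\<^sub>M (borel \<Otimes>\<^sub>M borel))))"
  unfolding gamma_D2_D1_def by measurable
lemma g3_meas[measurable]: "gamma_D2 alpha u2 a1 a2 rho \<in> borel_measurable (borel \<Otimes>\<^sub>M (borel \<Otimes>\<^sub>M (borel \<Otimes>\<^sub>M (borel \<Otimes>\<^sub>M borel))))"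
  unfolding gamma_D2_def by measurable
lemma g4_meas[measurable]: "gamma_D1_R alpha a1 w rho \<in> borel_measurable (borel \<Otimes>\<^sub>M (borel \<Otimes>\<^sub>M (borel \<Otimes>\<^sub>M (borel \<Otimes>\<^sub>M borel))))"
  unfolding gamma_D1_R_def by measurable
lemma g5_meas[measurable]: "gamma_D1 alpha u1 a1 rho \<in> borel_measurable (borel \<Otimes>\<^sub>M (borel \<Otimes>\<^sub>M (borel \<Otimes>\<^sub>M (borel \<Otimes>\<^sub>M borel))))"
  unfolding gamma_D1_def by measurable

definition good where
  "good alpha u1 u2 a1 a2 w g1 g2 rho s \<longleftrightarrow> (gamma_D2_R alpha a1 a2 w rho s \<ge> g2
          \<and> gamma_D2_D1 alpha u1 a1 a2 rho s \<ge> g2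
          \<and> gamma_D2 alpha u2 a1 a2 rho s \<ge> g2 \<and>
          min (gamma_D1_R alpha a1 w rho s) (gamma_D1 alpha u1 a1 rho s) \<ge> g1)"

lemma meas_bad0: "{s \<in> space (borel \<Otimes>\<^sub>M (borel \<Otimes>\<^sub>M (borel \<Otimes>\<^sub>M (borel \<Otimes>\<^sub>M borel)))). \<not> good alpha u1 u2 a1 a2 w g1 g2 rho s} \<in> sets (borel \<Otimes>\<^sub>M (borel \<Otimes>\<^sub>M (borel \<Otimes>\<^sub>M (borel \<Otimes>\<^sub>M borel))))"
  unfolding good_def by measurable

lemma meas_bad: "{s. \<not> good alpha u1 u2 a1 a2 w g1 g2 rho s} \<in> sets (relay_measure RD Omega)"
  using meas_bad0[of alpha u1 u2 a1 a2 w g1 g2 rho] sets_relay[of RD Omega]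
  by (simp add: space_pair_measure)

lemma outage_iff:
  "TRS_outage alpha u1 u2 a1 a2 w g1 g2 rho K om \<longleftrightarrow> (\<forall>i<K. \<not> good alpha u1 u2 a1 a2 w g1 g2 rho (om i))"
proof -
  define S where "S = TRS_S alpha u1 u2 a1 a2 w g2 rho K om"
  have fin: "finite S" unfolding S_def TRS_S_def by auto
  have "TRS_outage alpha u1 u2 a1 a2 w g1 g2 rho K om \<longleftrightarrow>
     (\<forall>i\<in>S. min (gamma_D1_R alpha a1 w rho (om i)) (gamma_D1 alpha u1 a1 rho (om i)) < g1)"
    unfolding TRS_outage_def Let_def S_def[symmetric]
    using fin by (cases "S = {}") (auto simp: Max_less_iff)
  also have "\<dots> \<longleftrightarrow> (\<forall>i<K. \<not> good alpha u1 u2 a1 a2 w g1 g2 rho (om i))"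
    unfolding S_def TRS_S_def good_def by auto
  finally show ?thesis .
qed

lemma P_eq:
  assumes "RD > 0" "Omega > 0"
  shows "P_TRS alpha u1 u2 RD Omega K a1 a2 w g1 g2 rho =
    (measure (relay_measure RD Omega) {s. \<not> good alpha u1 u2 a1 a2 w g1 g2 rho s}) ^ K"
proof -
  let ?M = "relay_measure RD Omega"
  let ?B = "{s. \<not> good alpha u1 u2 a1 a2 w g1 g2 rho s}"
  interpret M: prob_space ?M using prob_relay assms by blast
  interpret product_sigma_finite "\<lambda>_. ?M"
    by (simp add: product_sigma_finite_def M.sigma_finite_measure_axioms)
  have "{om \<in> space (network_space RD Omega K). TRS_outage alpha u1 u2 a1 a2 w g1 g2 rho K om}
      = PiE {..<K} (\<lambda>_. ?B)"
    unfolding network_space_def space_PiM space_relay outage_iff by auto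
  moreover have "emeasure (network_space RD Omega K) (PiE {..<K} (\<lambda>_. ?B)) = (\<Prod>i\<in>{..<K}. emeasure ?M ?B)"
    unfolding network_space_def by (rule emeasure_PiM) (auto simp: meas_bad)
  moreover have "(\<Prod>i\<in>{..<K}. emeasure ?M ?B) = ennreal ((measure ?M ?B) ^ K)"
    by (simp add: M.emeasure_eq_measure ennreal_power)
  ultimately show ?thesis
    unfolding P_TRS_def measure_def by simp
qed

lemma pair_UNIV_left:
  assumes "prob_space A" "prob_space B" "space A = UNIV" "S \<in> sets B"
  shows "emeasure (A \<Otimes>\<^sub>M B) (UNIV \<times> S) = emeasure B S"
proof -
  interpret A: prob_space A by fact
  interpret B: prob_space B by fact
  have "emeasure (A \<Otimes>\<^sub>M B) (space A \<times> S) = emeasure A (space A) * emeasure B S"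
    by (rule B.emeasure_pair_measure_Times) (simp_all add: assms(4))
  then show ?thesis using assms(3) A.emeasure_space_1 by simp
qed

lemma pair_UNIV_right:
  assumes "prob_space A" "prob_space B" "space B = UNIV" "S \<in> sets A"
  shows "emeasure (A \<Otimes>\<^sub>M B) (S \<times> UNIV) = emeasure A S"
proof -
  interpret A: prob_space A by fact
  interpret B: prob_space B by fact
  have "emeasure (A \<Otimes>\<^sub>M B) (S \<times> space B) = emeasure A S * emeasure B (space B)"
    by (rule B.emeasure_pair_measure_Times) (simp_all add: assms(4))
  then show ?thesis using assms(3) B.emeasure_space_1 by simp
qed

lemma exp1_atMost: "t \<ge> 0 \<Longrightarrow> emeasure (exp_mean 1) {..t} = ennreal (1 - exp (- t))"
  unfolding exp_mean_def by (simp add: emeasure_erlang_density erlang_CDF_0)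

lemma space_exp: "space (exp_mean m) = UNIV" by (simp add: exp_mean_def)
lemma sets_exp: "sets (exp_mean m) = sets borel" by (simp add: exp_mean_def)

lemma UNIV_sets: "space M = UNIV \<Longrightarrow> UNIV \<in> sets M"
  by (metis sets.top)
lemma times_UNIV_sets: "A \<in> sets M1 \<Longrightarrow> space M2 = UNIV \<Longrightarrow> A \<times> UNIV \<in> sets (M1 \<Otimes>\<^sub>M M2)"
  by (metis pair_measureI sets.top)
lemma UNIV_times_sets: "B \<in> sets M2 \<Longrightarrow> space M1 = UNIV \<Longrightarrow> UNIV \<times> B \<in> sets (M1 \<Otimes>\<^sub>M M2)"
  by (metis pair_measureI sets.top)
lemma atMost_sets_exp: "{..t} \<in> sets (exp_mean m)" by (simp add: sets_exp)

lemma cyl1: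
  assumes "RD > 0" "Omega > 0" "t \<ge> 0"
  shows "emeasure (relay_measure RD Omega) (UNIV \<times> ({..t} \<times> UNIV)) = ennreal (1 - exp (- t))"
  unfolding relay_measure_def
  apply (subst pair_UNIV_left)
  apply (auto intro!: prob_unif prob_exp_mean prob_space_pair intro!: times_UNIV_sets UNIV_times_sets atMost_sets_exp simp: assms space_exp space_pair_measure)
  apply (subst pair_UNIV_right)
  apply (auto intro!: prob_unif prob_exp_mean prob_space_pair intro!: times_UNIV_sets UNIV_times_sets atMost_sets_exp simp: assms space_exp space_pair_measure exp1_atMost)
  done

lemma cyl2:
  assumes "RD > 0" "Omega > 0" "t \<ge> 0"
  shows "emeasure (relay_measure RD Omega) (UNIV \<times> (UNIV \<times> ({..t} \<times> UNIV))) = ennreal (1 - exp (- t))"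
  unfolding relay_measure_def
  apply (subst pair_UNIV_left)
  apply (auto intro!: prob_unif prob_exp_mean prob_space_pair intro!: times_UNIV_sets UNIV_times_sets atMost_sets_exp simp: assms space_exp space_pair_measure)
  apply (subst pair_UNIV_left)
  apply (auto intro!: prob_unif prob_exp_mean prob_space_pair intro!: times_UNIV_sets UNIV_times_sets atMost_sets_exp simp: assms space_exp space_pair_measure)
  apply (subst pair_UNIV_right)
  apply (auto intro!: prob_unif prob_exp_mean prob_space_pair intro!: times_UNIV_sets UNIV_times_sets atMost_sets_exp simp: assms space_exp space_pair_measure exp1_atMost)
  done

lemma cyl3:
  assumes "RD > 0" "Omega > 0" "t \<ge> 0"
  shows "emeasure (relay_measure RD Omega) (UNIV \<times> (UNIV \<times> (UNIV \<times> ({..t} \<times> UNIV)))) = ennreal (1 - exp (- t))"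
  unfolding relay_measure_def
  apply (subst pair_UNIV_left)
  apply (auto intro!: prob_unif prob_exp_mean prob_space_pair intro!: times_UNIV_sets UNIV_times_sets atMost_sets_exp simp: assms space_exp space_pair_measure)
  apply (subst pair_UNIV_left)
  apply (auto intro!: prob_unif prob_exp_mean prob_space_pair intro!: times_UNIV_sets UNIV_times_sets atMost_sets_exp simp: assms space_exp space_pair_measure)
  apply (subst pair_UNIV_left)
  apply (auto intro!: prob_unif prob_exp_mean prob_space_pair intro!: times_UNIV_sets UNIV_times_sets atMost_sets_exp simp: assms space_exp space_pair_measure)
  apply (subst pair_UNIV_right)
  apply (auto intro!: prob_unif prob_exp_mean prob_space_pair intro!: times_UNIV_sets UNIV_times_sets atMost_sets_exp simp: assms space_exp space_pair_measure exp1_atMost)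
  done

lemma cyl0:
  assumes "RD > 0" "Omega > 0"
  shows "emeasure (relay_measure RD Omega) ((- cball 0 RD) \<times> UNIV) = 0"
  unfolding relay_measure_def
  apply (subst pair_UNIV_right)
  apply (auto intro!: prob_unif prob_exp_mean prob_space_pair intro!: times_UNIV_sets UNIV_times_sets atMost_sets_exp simp: assms space_exp space_pair_measure)
  done

lemma lb_gain:
  assumes "cmod q \<le> Dd" "x > th * (1 + Dd powr al) / rho" "rho > 0" "th > 0" "al > 0"
  shows "rho * (x / (1 + cmod q powr al)) \<ge> th"
proof -
  have d: "1 + cmod q powr al \<le> 1 + Dd powr al"
    using powr_mono2[of al "cmod q" Dd] assms by auto
  have p: "1 + cmod q powr al > 0" by (simp add: add_pos_nonneg)
  have "th * (1 + Dd powr al) < rho * x" using assms(2,3) by (simp add: field_simps)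
  have "0 < th * (1 + Dd powr al)" using assms(4) by (simp add: add_pos_nonneg)
  hence "0 < rho * x" using \<open>th * (1 + Dd powr al) < rho * x\<close> by linarith
  have "th * (1 + cmod q powr al) \<le> th * (1 + Dd powr al)" using d assms(4) by simp
  also have "\<dots> < rho * x" by fact
  finally show ?thesis using p by (simp add: field_simps)
qed

lemma sinr_ok:
  fixes rho v g2 a1 a2 :: real
  assumes "rho * v \<ge> g2 / (a2 - a1 * g2)" "a2 - a1 * g2 > 0" "g2 > 0" "a1 > 0"
  shows "rho * v * a2 / (rho * v * a1 + 1) \<ge> g2"
proof -
  have "g2 \<le> rho * v * (a2 - a1 * g2)" using pos_divide_le_eq[OF assms(2)] assms(1) by blast
  hence "0 < rho * v * (a2 - a1 * g2)" using assms(3) by linarith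
  hence pos: "rho * v > 0" using assms(2) by (simp add: zero_less_mult_iff)
  hence "rho * v * a1 > 0" using assms(4) by simp
  hence "rho * v * a1 + 1 > 0" by linarith
  with \<open>g2 \<le> rho * v * (a2 - a1 * g2)\<close> show ?thesis by (simp add: field_simps)
qed

lemma lower_incl:
  assumes "rho > 0" "a1 > 0" "g1 > 0"
  shows "UNIV \<times> ({..g1 / (2 * rho * a1)} \<times> UNIV) \<subseteq> {s. \<not> good alpha u1 u2 a1 a2 0 g1 g2 rho s}"
proof clarsimp
  fix p :: complex and x y1 y2 z :: real
  assume x: "x \<le> g1 / (2 * rho * a1)" and g: "good alpha u1 u2 a1 a2 0 g1 g2 rho (p, x, y1, y2, z)"
  have t: "g1 / (2 * rho * a1) > 0" using assms by simp
  have p: "1 + cmod p powr alpha \<ge> 1" by simp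
  have X: "x / (1 + cmod p powr alpha) \<le> g1 / (2 * rho * a1)"
  proof (cases "x \<le> 0")
    case True then show ?thesis using t p by (smt (verit) divide_nonpos_pos)
  next
    case False
    have "0 \<le> x * cmod p powr alpha" using False by simp
    moreover have "1 + cmod p powr alpha > 0" using p by linarith
    ultimately have "x / (1 + cmod p powr alpha) \<le> x" by (simp add: divide_le_eq algebra_simps)
    then show ?thesis using x by simp
  qed
  have "rho * (x / (1 + cmod p powr alpha)) * a1 \<le> rho * (g1 / (2 * rho * a1)) * a1"
    by (intro mult_right_mono mult_left_mono) (use assms X in auto)
  also have "\<dots> = g1 / 2" using assms by (simp add: field_simps)
  finally have "rho * (x / (1 + cmod p powr alpha)) * a1 \<le> g1 / 2" .
  hence "rho * (x / (1 + cmod p powr alpha)) * a1 < g1" using assms(3) by linarith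
  moreover have "gamma_D1_R alpha a1 0 rho (p, x, y1, y2, z) = rho * (x / (1 + cmod p powr alpha)) * a1"
    by (simp add: gamma_D1_R_def X_gain_def)
  moreover have "gamma_D1_R alpha a1 0 rho (p, x, y1, y2, z) \<ge> g1" using g by (simp add: good_def)
  ultimately show False by linarith
qed

lemma good_of:
  assumes "rho > 0" "a1 > 0" "g1 > 0" "g2 > 0" "a2 - a1 * g2 > 0" "alpha > 0"
    and th: "th = max (g2 / (a2 - a1 * g2)) (g1 / a1)"
    and T: "T = th * (1 + (RD + cmod u1 + cmod u2) powr alpha)"
    and RD: "RD > 0"
    and p: "cmod p \<le> RD"
    and x: "T / rho < x" and y1: "T / rho < y1" and y2: "T / rho < y2"
  shows "good alpha u1 u2 a1 a2 0 g1 g2 rho (p, x, y1, y2, z)"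
proof -
  define Dd where "Dd = RD + cmod u1 + cmod u2"
  have thp: "th > 0" using th assms by (auto simp: less_max_iff_disj)
  have T': "T / rho = th * (1 + Dd powr alpha) / rho" unfolding T Dd_def ..
  have p1: "cmod p \<le> Dd" using p unfolding Dd_def by (smt (verit) norm_ge_zero)
  have p2: "cmod (p - u1) \<le> Dd" using p norm_triangle_ineq4[of p u1] unfolding Dd_def by (smt (verit) norm_ge_zero)
  have p3: "cmod (p - u2) \<le> Dd" using p norm_triangle_ineq4[of p u2] unfolding Dd_def by (smt (verit) norm_ge_zero)
  have X: "rho * (x / (1 + cmod p powr alpha)) \<ge> th"
    by (rule lb_gain[OF p1 _ assms(1) thp assms(6)]) (use x T' in simp)
  have Y1: "rho * (y1 / (1 + cmod (p - u1) powr alpha)) \<ge> th"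
    by (rule lb_gain[OF p2 _ assms(1) thp assms(6)]) (use y1 T' in simp)
  have Y2: "rho * (y2 / (1 + cmod (p - u2) powr alpha)) \<ge> th"
    by (rule lb_gain[OF p3 _ assms(1) thp assms(6)]) (use y2 T' in simp)
  have a: "rho * v \<ge> th \<Longrightarrow> rho * v * a2 / (rho * v * a1 + 1) \<ge> g2" for v
    by (rule sinr_ok) (use th assms in auto)
  have b: "rho * v \<ge> th \<Longrightarrow> rho * v * a1 \<ge> g1" for v
    using th assms(2) by (auto simp: field_simps)
  let ?s = "(p, x, y1, y2, z)"
  have eX: "X_gain alpha ?s = x / (1 + cmod p powr alpha)" by (simp add: X_gain_def)
  have eY1: "Y1_gain alpha u1 ?s = y1 / (1 + cmod (p - u1) powr alpha)" by (simp add: Y1_gain_def)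
  have eY2: "Y2_gain alpha u2 ?s = y2 / (1 + cmod (p - u2) powr alpha)" by (simp add: Y2_gain_def)
  show "good alpha u1 u2 a1 a2 0 g1 g2 rho ?s"
    unfolding good_def gamma_D2_R_def gamma_D2_D1_def gamma_D2_def gamma_D1_R_def gamma_D1_def
    using a[OF X[folded eX]] a[OF Y1[folded eY1]] a[OF Y2[folded eY2]] b[OF X[folded eX]] b[OF Y1[folded eY1]]
    by simp
qed

lemma upper_incl:
  assumes "rho > 0" "a1 > 0" "g1 > 0" "g2 > 0" "a2 - a1 * g2 > 0" "alpha > 0"
    and th: "th = max (g2 / (a2 - a1 * g2)) (g1 / a1)"
    and T: "T = th * (1 + (RD + cmod u1 + cmod u2) powr alpha)"
    and RD: "RD > 0"
  shows "{s. \<not> good alpha u1 u2 a1 a2 0 g1 g2 rho s} \<subseteq>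
     ((- cball 0 RD) \<times> UNIV) \<union> (UNIV \<times> ({..T / rho} \<times> UNIV)) \<union>
     (UNIV \<times> (UNIV \<times> ({..T / rho} \<times> UNIV))) \<union> (UNIV \<times> (UNIV \<times> (UNIV \<times> ({..T / rho} \<times> UNIV))))"
proof
  fix s assume "s \<in> {s. \<not> good alpha u1 u2 a1 a2 0 g1 g2 rho s}"
  moreover obtain p x y1 y2 z where s: "s = (p, x, y1, y2, z)" by (metis prod.exhaust)
  ultimately have ng: "\<not> good alpha u1 u2 a1 a2 0 g1 g2 rho (p, x, y1, y2, z)" by simp
  show "s \<in> ((- cball 0 RD) \<times> UNIV) \<union> (UNIV \<times> ({..T / rho} \<times> UNIV)) \<union>
     (UNIV \<times> (UNIV \<times> ({..T / rho} \<times> UNIV))) \<union> (UNIV \<times> (UNIV \<times> (UNIV \<times> ({..T / rho} \<times> UNIV))))"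
  proof (rule ccontr)
    assume "\<not> ?thesis"
    hence "cmod p \<le> RD" "T / rho < x" "T / rho < y1" "T / rho < y2" unfolding s by auto
    from good_of[OF assms this] ng show False by blast
  qed
qed

lemma exp_lb: fixes t :: real assumes "0 \<le> t" "t \<le> 1" shows "t / 2 \<le> 1 - exp (- t)"
proof -
  have "1 + t \<le> exp t" by (rule exp_ge_add_one_self)
  hence "exp (-t) * (1 + t) \<le> exp (-t) * exp t" by (simp add: mult_left_mono)
  also have "\<dots> = 1" by (simp add: exp_minus field_simps)
  finally have a: "exp (-t) * (1 + t) \<le> 1" .
  have "t * t \<le> t" using assms by (simp add: mult_left_le_one_le)
  hence "(1 - t/2) * (1 + t) \<ge> 1" by (simp add: algebra_simps)
  show ?thesis
  proof (rule ccontr)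
    assume "\<not> ?thesis"
    hence "exp (-t) > 1 - t/2" by simp
    hence "exp (-t) * (1 + t) > (1 - t/2) * (1 + t)" using assms by (intro mult_strict_right_mono) auto
    thus False using a \<open>(1 - t/2) * (1 + t) \<ge> 1\<close> by linarith
  qed
qed

lemma exp_ub: fixes t :: real shows "1 - exp (- t) \<le> t"
  using exp_ge_add_one_self[of "-t"] by simp

lemma exp_nn: fixes t :: real shows "t \<ge> 0 \<Longrightarrow> 0 \<le> 1 - exp (- t)"
  by simp

lemma sets_cyl:
  "UNIV \<times> ({..t} \<times> UNIV) \<in> sets (relay_measure RD Omega)"
  "UNIV \<times> (UNIV \<times> ({..t} \<times> UNIV)) \<in> sets (relay_measure RD Omega)"
  "UNIV \<times> (UNIV \<times> (UNIV \<times> ({..t} \<times> UNIV))) \<in> sets (relay_measure RD Omega)"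
  "(- cball 0 RD) \<times> UNIV \<in> sets (relay_measure RD Omega)"
  by (simp_all add: sets_relay, auto intro!: times_UNIV_sets UNIV_times_sets simp: space_pair_measure)

lemma mcyl:
  assumes "RD > 0" "Omega > 0" "t \<ge> 0"
  shows "measure (relay_measure RD Omega) (UNIV \<times> ({..t} \<times> UNIV)) = 1 - exp (- t)"
    "measure (relay_measure RD Omega) (UNIV \<times> (UNIV \<times> ({..t} \<times> UNIV))) = 1 - exp (- t)"
    "measure (relay_measure RD Omega) (UNIV \<times> (UNIV \<times> (UNIV \<times> ({..t} \<times> UNIV)))) = 1 - exp (- t)"
    "measure (relay_measure RD Omega) ((- cball 0 RD) \<times> UNIV) = 0"
  using cyl1[OF assms] cyl2[OF assms] cyl3[OF assms] cyl0[OF assms(1,2)] exp_nn[OF assms(3)]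
  by (simp_all add: measure_def)

theorem mainTheorem4:
  fixes K :: nat and alpha RD Omega a1 a2 R1 R2 :: real and u1 u2 :: complex
  assumes "K \<ge> 1" and "alpha > 0" and "RD > 0" and "Omega > 0"
    and "cmod u1 > 0" and "cmod u2 > 0"
    and "R1 > 0" and "R2 > 0"
    and "0 < a1" and "a1 < a2" and "a1 + a2 = 1" and "a2 > a1 * gamma_th_HD R2"
  shows "((\<lambda>rho. - (ln (P_TRS_HD alpha u1 u2 RD Omega K a1 a2 R1 R2 rho) / ln rho))
           \<longlongrightarrow> real K) at_top"
proof -
  define g1 where "g1 = gamma_th_HD R1"
  define g2 where "g2 = gamma_th_HD R2"
  have g1p: "g1 > 0" unfolding g1_def gamma_th_HD_def using powr_less_mono[of 0 "2*R1" 2] assms by simp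
  have g2p: "g2 > 0" unfolding g2_def gamma_th_HD_def using powr_less_mono[of 0 "2*R2" 2] assms by simp
  have cp: "a2 - a1 * g2 > 0" using assms g2_def by simp
  define th where "th = max (g2 / (a2 - a1 * g2)) (g1 / a1)"
  define T where "T = th * (1 + (RD + cmod u1 + cmod u2) powr alpha)"
  have thp: "th > 0" using th_def g1p assms by (auto simp: less_max_iff_disj)
  have Tp: "T > 0" unfolding T_def using thp by (simp add: add_pos_nonneg)
  let ?M = "relay_measure RD Omega"
  interpret M: prob_space ?M using prob_relay assms by blast
  define q where "q rho = measure ?M {s. \<not> good alpha u1 u2 a1 a2 0 g1 g2 rho s}" for rho
  have Peq: "P_TRS_HD alpha u1 u2 RD Omega K a1 a2 R1 R2 rho = q rho ^ K" for rho
    unfolding P_TRS_HD_def q_def g1_def[symmetric] g2_def[symmetric] using P_eq assms(3,4) by blast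
  define l where "l = g1 / (4 * a1)"
  define u where "u = 3 * T"
  have lp: "l > 0" unfolding l_def using g1p assms by simp
  have up: "u > 0" unfolding u_def using Tp by simp
  have sub: "A \<in> sets ?M \<Longrightarrow> B \<in> sets ?M \<Longrightarrow> measure ?M (A \<union> B) \<le> measure ?M A + measure ?M B" for A B
    by (rule measure_subadditive) (auto simp: M.emeasure_finite)
  have lower: "l / rho \<le> q rho" if r: "rho \<ge> max 1 (g1 / (2 * a1))" for rho
  proof -
    define t where "t = g1 / (2 * rho * a1)"
    have rp: "rho > 0" using r by simp
    have t0: "t \<ge> 0" unfolding t_def using g1p rp assms by simp
    have "g1 / (2 * a1) \<le> rho" using r by simp
    hence t1: "t \<le> 1" unfolding t_def using rp assms by (simp add: field_simps)
    have "l / rho = t / 2" unfolding l_def t_def by (simp add: field_simps)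
    also have "\<dots> \<le> 1 - exp (- t)" by (rule exp_lb[OF t0 t1])
    also have "\<dots> = measure ?M (UNIV \<times> ({..t} \<times> UNIV))" using mcyl(1)[OF assms(3,4) t0] by simp
    also have "\<dots> \<le> q rho" unfolding q_def t_def
      by (rule M.finite_measure_mono[OF lower_incl meas_bad]) (use rp g1p assms in auto)
    finally show ?thesis .
  qed
  have upper: "q rho \<le> u / rho" if rp: "rho > 0" for rho
  proof -
    let ?A0 = "(- cball 0 RD) \<times> (UNIV :: (real \<times> real \<times> real \<times> real) set)"
    let ?A1 = "(UNIV :: complex set) \<times> ({..T / rho} \<times> (UNIV :: (real \<times> real \<times> real) set))"
    let ?A2 = "(UNIV :: complex set) \<times> ((UNIV :: real set) \<times> ({..T / rho} \<times> (UNIV :: (real \<times> real) set)))"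
    let ?A3 = "(UNIV :: complex set) \<times> ((UNIV :: real set) \<times> ((UNIV :: real set) \<times> ({..T / rho} \<times> (UNIV :: real set))))"
    have t0: "T / rho \<ge> 0" using Tp rp by simp
    have "q rho \<le> measure ?M (?A0 \<union> ?A1 \<union> ?A2 \<union> ?A3)" unfolding q_def
      by (rule M.finite_measure_mono[OF upper_incl[OF rp assms(9) g1p g2p cp assms(2) th_def T_def assms(3)]])
         (intro sets.Un sets_cyl)
    also have "\<dots> \<le> measure ?M (?A0 \<union> ?A1 \<union> ?A2) + measure ?M ?A3"
      by (intro sub sets.Un sets_cyl)
    also have "\<dots> \<le> measure ?M (?A0 \<union> ?A1) + measure ?M ?A2 + measure ?M ?A3"
      using sub[of "?A0 \<union> ?A1" ?A2] sets_cyl by simp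
    also have "\<dots> \<le> measure ?M ?A0 + measure ?M ?A1 + measure ?M ?A2 + measure ?M ?A3"
      using sub[of ?A0 ?A1] sets_cyl by simp
    also have "\<dots> = 3 * (1 - exp (- (T / rho)))"
      using mcyl[OF assms(3,4) t0] by simp
    also have "\<dots> \<le> 3 * (T / rho)" using exp_ub[of "T / rho"] by simp
    finally show ?thesis unfolding u_def by simp
  qed
  define f where "f rho = - (ln (P_TRS_HD alpha u1 u2 RD Omega K a1 a2 R1 R2 rho) / ln rho)" for rho
  have bounds: "real K * ((ln rho - ln u) / ln rho) \<le> f rho \<and> f rho \<le> real K * ((ln rho - ln l) / ln rho)"
    if r: "rho \<ge> max 2 (g1 / (2 * a1))" for rho
  proof -
    have rp: "rho > 1" using r by simp
    have lnp: "ln rho > 0" using rp by simp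
    have ql: "l / rho \<le> q rho" by (rule lower) (use r in auto)
    have qu: "q rho \<le> u / rho" by (rule upper) (use rp in auto)
    have qp: "q rho > 0" using ql lp rp by (smt (verit) divide_pos_pos)
    have f_eq: "f rho = real K * ((- ln (q rho)) / ln rho)"
      unfolding f_def Peq using qp by (simp add: ln_realpow)
    have "ln (q rho) \<le> ln (u / rho)" using qp qu by simp
    also have "\<dots> = ln u - ln rho" using up rp by (simp add: ln_div)
    finally have h1: "ln rho - ln u \<le> - ln (q rho)" by simp
    have "ln l - ln rho = ln (l / rho)" using lp rp by (simp add: ln_div)
    also have "\<dots> \<le> ln (q rho)"
    proof -
      have "0 < l / rho" using lp rp by simp
      thus ?thesis using ql by simp
    qed
    finally have h2: "- ln (q rho) \<le> ln rho - ln l" by simp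
    have "(ln rho - ln u) / ln rho \<le> (- ln (q rho)) / ln rho"
      by (rule divide_right_mono) (use h1 lnp in auto)
    moreover have "(- ln (q rho)) / ln rho \<le> (ln rho - ln l) / ln rho"
      by (rule divide_right_mono) (use h2 lnp in auto)
    ultimately show ?thesis unfolding f_eq
      by (intro conjI mult_left_mono) auto
  qed
  have lim: "((\<lambda>rho. real K * ((ln rho - c) / ln rho)) \<longlongrightarrow> real K) at_top" for c
  proof -
    have "((\<lambda>rho. c / ln rho) \<longlongrightarrow> 0) at_top"
      by (rule tendsto_divide_0[OF tendsto_const filterlim_at_top_imp_at_infinity[OF ln_at_top]])
    hence "((\<lambda>rho. real K * (1 - c / ln rho)) \<longlongrightarrow> real K * (1 - 0)) at_top"
      by (intro tendsto_intros)
    hence L: "((\<lambda>rho. real K * (1 - c / ln rho)) \<longlongrightarrow> real K) at_top" by simp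
    have E: "eventually (\<lambda>rho. real K * (1 - c / ln rho) = real K * ((ln rho - c) / ln rho)) at_top"
      using eventually_gt_at_top[of 1] by eventually_elim (simp add: diff_divide_distrib)
    show ?thesis using tendsto_cong[OF E] L by blast
  qed
  have ev: "eventually (\<lambda>rho. real K * ((ln rho - ln u) / ln rho) \<le> f rho \<and> f rho \<le> real K * ((ln rho - ln l) / ln rho)) at_top"
    using eventually_ge_at_top[of "max 2 (g1 / (2 * a1))"] by eventually_elim (rule bounds)
  have ev1: "eventually (\<lambda>rho. real K * ((ln rho - ln u) / ln rho) \<le> f rho) at_top"
    using ev by eventually_elim blast
  have ev2: "eventually (\<lambda>rho. f rho \<le> real K * ((ln rho - ln l) / ln rho)) at_top"
    using ev by eventually_elim blast
  have "(f \<longlongrightarrow> real K) at_top"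
    by (rule tendsto_sandwich[OF ev1 ev2 lim[of "ln u"] lim[of "ln l"]])
  then show ?thesis unfolding f_def .
qed

end
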